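(* Let $n$ be sufficiently large, let $k \ge 4\log_2 n + 2$ be an integer, and let $T_k$ be any tournament on $k$ vertices. Then OBreaker has a winning strategy in the orientation game $Or(T_k,n)$.
   Context: A tournament is a directed graph in which every pair of distinct vertices is joined by exactly one directed edge. The orientation game $Or(T_k,n)$ is played on the edge set of $K_n$ by two players, OMaker and OBreaker. OMaker moves first, and the players then alternate. In each move the player chooses one previously undirected edge of $K_n$ and gives it a direction. The game ends when all edges are directed. OMaker wins if the final digraph, which contains the edges directed by both players, contains a copy of $T_k$; otherwise OBreaker wins. *)

theory Defs
  imports Complex_Main
begin

definition is_tournament :: "nat \<Rightarrow> (nat \<times> nat) set \<Rightarrow> bool" where
  "is_tournament k T \<longleftrightarrow>
     T \<subseteq> {0..<k} \<times> {0..<k} \<and>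
     (\<forall>i\<in>{0..<k}. (i, i) \<notin> T) \<and>
     (\<forall>i\<in>{0..<k}. \<forall>j\<in>{0..<k}. i \<noteq> j \<longrightarrow> ((i, j) \<in> T \<longleftrightarrow> (j, i) \<notin> T))"

text \<open>A legal move in the orientation game on K_n (vertices {0..<n}) in position D:
  orient a previously undirected edge {u,v} as the arc (u,v).\<close>
definition legal_move :: "nat \<Rightarrow> (nat \<times> nat) set \<Rightarrow> nat \<times> nat \<Rightarrow> bool" where
  "legal_move n D e \<longleftrightarrow> (case e of (u, v) \<Rightarrow>
     u < n \<and> v < n \<and> u \<noteq> v \<and> (u, v) \<notin> D \<and> (v, u) \<notin> D)"

definition game_over :: "nat \<Rightarrow> (nat \<times> nat) set \<Rightarrow> bool" where
  "game_over n D \<longleftrightarrow> (\<forall>e. \<not> legal_move n D e)"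

definition contains_copy :: "nat \<Rightarrow> (nat \<times> nat) set \<Rightarrow> nat \<Rightarrow> (nat \<times> nat) set \<Rightarrow> bool" where
  "contains_copy n D k T \<longleftrightarrow>
     (\<exists>f. inj_on f {0..<k} \<and> f ` {0..<k} \<subseteq> {0..<n} \<and>
          (\<forall>(i, j)\<in>T. (f i, f j) \<in> D))"

text \<open>OBreaker can force a win in Or(T,n) from position D; the boolean says whether
  OMaker is to move.  Least fixed point = OBreaker has a strategy winning in every play.\<close>
inductive breaker_wins_from ::
  "nat \<Rightarrow> nat \<Rightarrow> (nat \<times> nat) set \<Rightarrow> (nat \<times> nat) set \<Rightarrow> bool \<Rightarrow> bool"
  for n k T where
  final: "game_over n D \<Longrightarrow> \<not> contains_copy n D k T \<Longrightarrow> breaker_wins_from n k T D b"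
| maker_turn: "\<not> game_over n D \<Longrightarrow>
      (\<And>e. legal_move n D e \<Longrightarrow> breaker_wins_from n k T (insert e D) False) \<Longrightarrow>
      breaker_wins_from n k T D True"
| breaker_turn: "legal_move n D e \<Longrightarrow> breaker_wins_from n k T (insert e D) True \<Longrightarrow>
      breaker_wins_from n k T D False"

definition breaker_wins :: "nat \<Rightarrow> nat \<Rightarrow> (nat \<times> nat) set \<Rightarrow> bool" where
  "breaker_wins n k T \<longleftrightarrow> breaker_wins_from n k T {} True"

end

theory Submission
  imports Defs "HOL-Library.FuncSet"
begin

abbreviation cc :: real where "cc \<equiv> sqrt 2"

lemma cc_sq: "cc * cc = 2" by simp
lemma cc_ge1: "cc \<ge> 1" by simp
lemma cc_lt2: "cc < 2"
  by (smt (verit) real_sqrt_less_iff real_sqrt_four)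

locale ctx =
  fixes n k :: nat and T :: "(nat \<times> nat) set"
  assumes tour: "is_tournament k T"
begin

definition EE :: "(nat \<Rightarrow> nat) set" where
  "EE = {g \<in> {0..<k} \<rightarrow>\<^sub>E {0..<n}. inj_on g {0..<k}}"

definition needs :: "(nat \<Rightarrow> nat) \<Rightarrow> nat \<times> nat \<Rightarrow> bool" where
  "needs f e \<longleftrightarrow> (\<exists>(i,j)\<in>T. (f i, f j) = e)"

definition alive :: "(nat \<times> nat) set \<Rightarrow> (nat \<Rightarrow> nat) \<Rightarrow> bool" where
  "alive D f \<longleftrightarrow> (\<forall>(i,j)\<in>T. (f j, f i) \<notin> D)"

definition mm :: "(nat \<times> nat) set \<Rightarrow> (nat \<Rightarrow> nat) \<Rightarrow> nat" where
  "mm D f = card {p\<in>T. (f (fst p), f (snd p)) \<in> D}"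

definition w :: "(nat \<times> nat) set \<Rightarrow> (nat \<Rightarrow> nat) \<Rightarrow> real" where
  "w D f = (if alive D f then cc ^ mm D f else 0)"

definition Phi :: "(nat \<times> nat) set \<Rightarrow> real" where
  "Phi D = (\<Sum>f\<in>EE. w D f)"

definition AA :: "(nat \<times> nat) set \<Rightarrow> nat \<times> nat \<Rightarrow> real" where
  "AA D e = (\<Sum>f\<in>EE. if needs f e then w D f else 0)"

definition asym :: "(nat \<times> nat) set \<Rightarrow> bool" where
  "asym D \<longleftrightarrow> (\<forall>u v. (u,v) \<in> D \<longrightarrow> (v,u) \<notin> D)"

lemma T_sub: "T \<subseteq> {0..<k} \<times> {0..<k}" using tour unfolding is_tournament_def by blast

lemma finT: "finite T" using T_sub finite_subset by blast

lemma finEE: "finite EE" unfolding EE_def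
  by (rule finite_subset[of _ "{0..<k} \<rightarrow>\<^sub>E {0..<n}"]) (auto intro: finite_PiE)

lemma needs_disj:
  assumes inj: "inj_on f {0..<k}" and "needs f (u,v)" shows "\<not> needs f (v,u)"
proof
  assume "needs f (v,u)"
  then obtain i' j' where p': "(i',j') \<in> T" "f i' = v" "f j' = u" unfolding needs_def by auto
  from assms(2) obtain i j where p: "(i,j) \<in> T" "f i = u" "f j = v" unfolding needs_def by auto
  have r: "i < k" "j < k" "i' < k" "j' < k" using p p' T_sub by auto
  have "i = j'" using inj p p' r by (metis atLeastLessThan_iff inj_on_def zero_le)
  moreover have "j = i'" using inj p p' r by (metis atLeastLessThan_iff inj_on_def zero_le)
  ultimately have "(i,j) \<in> T" "(j,i) \<in> T" using p p' by auto
  thus False using tour r unfolding is_tournament_def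
    by (metis atLeastLessThan_iff zero_le)
qed

lemma alive_ins: "alive (insert (u,v) D) f \<longleftrightarrow> alive D f \<and> \<not> needs f (v,u)"
  unfolding alive_def needs_def by auto

lemma mm_ins:
  assumes leg: "legal_move n D (u,v)" and inj: "inj_on f {0..<k}"
  shows "mm (insert (u,v) D) f = mm D f + (if needs f (u,v) then 1 else 0)"
proof -
  let ?S = "{p\<in>T. (f (fst p), f (snd p)) \<in> D}"
  let ?N = "{p\<in>T. (f (fst p), f (snd p)) = (u,v)}"
  have eq: "{p\<in>T. (f (fst p), f (snd p)) \<in> insert (u,v) D} = ?S \<union> ?N" by auto
  have dis: "?S \<inter> ?N = {}" using leg unfolding legal_move_def by auto
  have fin: "finite ?S" "finite ?N" using finT by auto
  have cN: "card ?N = (if needs f (u,v) then 1 else 0)"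
  proof (cases "needs f (u,v)")
    case True
    then obtain i j where p: "(i,j) \<in> T" "f i = u" "f j = v" unfolding needs_def by auto
    have "?N = {(i,j)}"
    proof (rule set_eqI)
      fix x show "x \<in> ?N \<longleftrightarrow> x \<in> {(i,j)}"
      proof
        assume x: "x \<in> ?N"
        obtain a b where xab: "x = (a,b)" by force
        have ab: "(a,b) \<in> T" "f a = u" "f b = v" using x xab by auto
        have "a < k" "b < k" "i < k" "j < k" using p ab T_sub by auto
        hence "a = i" "b = j" using inj p ab unfolding inj_on_def by auto
        thus "x \<in> {(i,j)}" using xab by simp
      qed (use p in auto)
    qed
    thus ?thesis using True by simp
  next
    case False
    hence "?N = {}" unfolding needs_def by force
    hence "card ?N = 0" by (simp only: card.empty)
    thus ?thesis using False by simp
  qed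
  show ?thesis unfolding mm_def eq using card_Un_disjoint[OF fin dis] cN by simp
qed

lemma w_nonneg: "w D f \<ge> 0" unfolding w_def by simp

lemma w_le_cc: "w D f \<le> cc * w D f"
  using mult_right_mono[OF cc_ge1 w_nonneg[of D f]] by simp

lemma w_ins:
  assumes leg: "legal_move n D (u,v)" and inj: "inj_on f {0..<k}"
  shows "w (insert (u,v) D) f = w D f + (cc - 1) * (if needs f (u,v) then w D f else 0)
            - (if needs f (v,u) then w D f else 0)"
proof (cases "needs f (u,v)")
  case True
  hence "\<not> needs f (v,u)" using needs_disj inj by blast
  thus ?thesis using True mm_ins[OF leg inj] alive_ins[of u v D f]
    unfolding w_def by (simp add: algebra_simps)
next
  case False
  thus ?thesis using mm_ins[OF leg inj] alive_ins[of u v D f]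
    unfolding w_def by simp
qed

lemma w_ins_le:
  assumes leg: "legal_move n D (u,v)" and inj: "inj_on f {0..<k}"
  shows "w (insert (u,v) D) f \<le> cc * w D f"
  using w_ins[OF assms] w_nonneg[of D f] cc_ge1
  by (cases "needs f (u,v)"; cases "needs f (v,u)") (use w_le_cc[of D f] in \<open>auto simp: algebra_simps\<close>)

lemma Phi_ins:
  assumes leg: "legal_move n D (u,v)"
  shows "Phi (insert (u,v) D) = Phi D + (cc - 1) * AA D (u,v) - AA D (v,u)"
proof -
  have "Phi (insert (u,v) D) = (\<Sum>f\<in>EE. w D f + (cc - 1) * (if needs f (u,v) then w D f else 0)
            - (if needs f (v,u) then w D f else 0))"
    unfolding Phi_def by (rule sum.cong) (use w_ins[OF leg] in \<open>auto simp: EE_def\<close>)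
  also have "\<dots> = Phi D + (cc - 1) * AA D (u,v) - AA D (v,u)"
    unfolding Phi_def AA_def by (simp add: sum.distrib sum_subtractf sum_distrib_left)
  finally show ?thesis .
qed

lemma AA_ins_le:
  assumes leg: "legal_move n D (u,v)"
  shows "AA (insert (u,v) D) e \<le> cc * AA D e"
  unfolding AA_def sum_distrib_left
  by (rule sum_mono) (auto simp: EE_def intro: w_ins_le[OF leg])

lemma AA_le_Phi: "AA D e \<le> Phi D"
  unfolding AA_def Phi_def by (rule sum_mono) (simp add: w_nonneg)

lemma AA_nonneg: "AA D e \<ge> 0"
  unfolding AA_def by (rule sum_nonneg) (simp add: w_nonneg)


definition LL :: "(nat \<times> nat) set \<Rightarrow> (nat \<times> nat) set" where
  "LL D = {e. legal_move n D e}"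

lemma finLL: "finite (LL D)"
  by (rule finite_subset[of _ "{0..<n} \<times> {0..<n}"]) (auto simp: LL_def legal_move_def)

lemma legal_mono: "legal_move n (insert e D) e' \<Longrightarrow> legal_move n D e'"
  unfolding legal_move_def by (cases e') auto

lemma not_legal_self: "\<not> legal_move n (insert e D) e"
  unfolding legal_move_def by (cases e) auto

lemma LL_ins: "legal_move n D e \<Longrightarrow> LL (insert e D) \<subset> LL D"
  unfolding LL_def using legal_mono not_legal_self by blast

lemma legal_rev: "legal_move n D (u,v) \<Longrightarrow> legal_move n D (v,u)"
  unfolding legal_move_def by auto


lemma asym_ins: "asym D \<Longrightarrow> legal_move n D (u,v) \<Longrightarrow> asym (insert (u,v) D)"
  unfolding asym_def legal_move_def by auto

lemma copy_big:
  assumes "asym D" "contains_copy n D k T"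
  shows "cc ^ card T \<le> Phi D"
proof -
  from assms(2) obtain f where f: "inj_on f {0..<k}" "f ` {0..<k} \<subseteq> {0..<n}"
    "\<forall>(i,j)\<in>T. (f i, f j) \<in> D" unfolding contains_copy_def by blast
  let ?g = "restrict f {0..<k}"
  have gE: "?g \<in> EE" unfolding EE_def using f by (auto simp: inj_on_def)
  have arcs: "\<forall>(i,j)\<in>T. (?g i, ?g j) \<in> D"
  proof (intro ballI, clarify)
    fix i j assume ij: "(i,j) \<in> T"
    hence "i < k" "j < k" using T_sub by auto
    thus "(?g i, ?g j) \<in> D" using f(3) ij by auto
  qed
  have al: "alive D ?g" unfolding alive_def using arcs assms(1) unfolding asym_def by blast
  have "{p\<in>T. (?g (fst p), ?g (snd p)) \<in> D} = T" using arcs by auto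
  hence "mm D ?g = card T" unfolding mm_def by simp
  hence "w D ?g = cc ^ card T" using al unfolding w_def by simp
  moreover have "w D ?g \<le> Phi D" unfolding Phi_def
    by (rule member_le_sum[OF gE]) (auto simp: w_nonneg finEE)
  ultimately show ?thesis by simp
qed

lemma game:
  fixes B :: real
  assumes "B = cc ^ card T"
  shows "asym D \<Longrightarrow> (Phi D < B \<longrightarrow> breaker_wins_from n k T D False) \<and>
     ((\<forall>e. legal_move n D e \<longrightarrow> Phi D + (cc - 1) * AA D e < B) \<longrightarrow> Phi D < B
        \<longrightarrow> breaker_wins_from n k T D True)"
proof (induction "card (LL D)" arbitrary: D rule: less_induct)
  case less
  have nocopy: "\<not> contains_copy n D k T" if "Phi D < B"
  proof
    assume "contains_copy n D k T"
    hence "cc ^ card T \<le> Phi D" using copy_big[OF less.prems] by blast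
    thus False using that assms by simp
  qed
  show ?case
  proof (intro conjI impI)
    assume PB: "Phi D < B"
    show "breaker_wins_from n k T D False"
    proof (cases "game_over n D")
      case True
      thus ?thesis using nocopy[OF PB] by (rule breaker_wins_from.final)
    next
      case False
      hence ne: "LL D \<noteq> {}" unfolding game_over_def LL_def by auto
      obtain e0 where e0: "e0 \<in> LL D" "\<forall>e\<in>LL D. AA D e \<le> AA D e0"
      proof -
        have fi: "finite (AA D ` LL D)" using finLL by simp
        have "Max (AA D ` LL D) \<in> AA D ` LL D" using Max_in[OF fi] ne by simp
        then obtain e0 where "e0 \<in> LL D" "AA D e0 = Max (AA D ` LL D)" by auto
        moreover have "\<forall>e\<in>LL D. AA D e \<le> Max (AA D ` LL D)" using fi by simp
        ultimately show ?thesis using that by metis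
      qed
      obtain u v where uv: "e0 = (u,v)" by force
      have leg: "legal_move n D (u,v)" using e0 uv unfolding LL_def by simp
      have legr: "legal_move n D (v,u)" using legal_rev[OF leg] .
      define M where "M = AA D (u,v)"
      have Mmax: "AA D e \<le> M" if "legal_move n D e" for e
        using e0 uv that unfolding M_def LL_def by (cases e) auto
      let ?D' = "insert (v,u) D"
      have Phi': "Phi ?D' = Phi D + (cc - 1) * AA D (v,u) - M"
        using Phi_ins[OF legr] unfolding M_def .
      have M0: "M \<ge> 0" unfolding M_def by (rule AA_nonneg)
      have c1: "cc - 1 \<ge> 0" using cc_ge1 by simp
      have avu: "AA D (v,u) \<le> M" using Mmax[OF legr] .
      have key: "Phi ?D' + (cc - 1) * AA ?D' e \<le> Phi D" if le: "legal_move n ?D' e" for e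
      proof -
        obtain a b where ab: "e = (a,b)" by force
        have "AA ?D' e \<le> cc * AA D e" using AA_ins_le[OF legr] .
        also have "\<dots> \<le> cc * M" using Mmax[OF legal_mono[OF le]] by simp
        finally have "(cc - 1) * AA ?D' e \<le> (cc - 1) * (cc * M)"
          using c1 mult_left_mono by blast
        moreover have "(cc - 1) * AA D (v,u) \<le> (cc - 1) * M"
          using c1 avu mult_left_mono by blast
        ultimately have "Phi ?D' + (cc - 1) * AA ?D' e \<le> Phi D + (cc - 1) * M - M + (cc - 1) * (cc * M)"
          using Phi' by linarith
        also have "\<dots> = Phi D + M * (cc * cc - 2)" by (simp add: algebra_simps)
        also have "\<dots> = Phi D" using cc_sq by simp
        finally show ?thesis .
      qed
      have Phi'le: "Phi ?D' \<le> Phi D"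
      proof -
        have "(cc - 1) * AA D (v,u) \<le> (cc - 1) * M"
          using c1 avu mult_left_mono by blast
        moreover have "(cc - 1) * M \<le> 1 * M" using cc_lt2 M0 by (intro mult_right_mono) auto
        ultimately show ?thesis using Phi' by linarith
      qed
      have lt: "card (LL ?D') < card (LL D)"
        using psubset_card_mono[OF finLL LL_ins[OF legr]] .
      have as': "asym ?D'" using asym_ins[OF less.prems legr] .
      have all: "\<forall>e. legal_move n ?D' e \<longrightarrow> Phi ?D' + (cc - 1) * AA ?D' e < B"
        using key PB by (meson le_less_trans)
      have "Phi ?D' < B" using Phi'le PB by simp
      hence "breaker_wins_from n k T ?D' True"
        using less.hyps[OF lt as'] all by blast
      thus ?thesis by (rule breaker_wins_from.breaker_turn[OF legr])
    qed
  next
    assume H: "\<forall>e. legal_move n D e \<longrightarrow> Phi D + (cc - 1) * AA D e < B" and PB: "Phi D < B"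
    show "breaker_wins_from n k T D True"
    proof (cases "game_over n D")
      case True
      thus ?thesis using nocopy[OF PB] by (rule breaker_wins_from.final)
    next
      case False
      show ?thesis
      proof (rule breaker_wins_from.maker_turn[OF False])
        fix e assume le: "legal_move n D e"
        obtain a b where ab: "e = (a,b)" by force
        have "Phi (insert e D) \<le> Phi D + (cc - 1) * AA D e"
          using Phi_ins[of D a b] le ab AA_nonneg[of D "(b,a)"] by simp
        hence "Phi (insert e D) < B" using H le by (meson le_less_trans)
        moreover have "card (LL (insert e D)) < card (LL D)"
          using psubset_card_mono[OF finLL LL_ins[OF le]] .
        moreover have "asym (insert e D)" using asym_ins[of D a b] less.prems le ab by simp
        ultimately show "breaker_wins_from n k T (insert e D) False"
          using less.hyps[of "insert e D"] by blast
      qed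
    qed
  qed
qed

lemma card_offdiag: "card {(i,j). i < k \<and> j < (k::nat) \<and> i \<noteq> j} = k * k - k"
proof -
  have eq: "{(i,j). i < k \<and> j < (k::nat) \<and> i \<noteq> j} = ({0..<k} \<times> {0..<k}) - (\<lambda>i. (i,i)) ` {0..<k}"
    by auto
  have c1: "card ((\<lambda>i. (i,i)) ` {0..<k}) = k" by (subst card_image) (auto simp: inj_on_def)
  have sub: "(\<lambda>i. (i,i)) ` {0..<k} \<subseteq> {0..<k} \<times> {0..<k}" by auto
  show ?thesis unfolding eq using card_Diff_subset[OF _ sub] c1 by (simp add: card_cartesian_product)
qed

lemma card_T: "2 * card T = k * (k - 1)"
proof -
  let ?O = "{(i,j). i < k \<and> j < (k::nat) \<and> i \<noteq> j}"
  have tr1: "\<And>i. i < k \<Longrightarrow> (i, i) \<notin> T"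
    using tour unfolding is_tournament_def by auto
  have tr2: "\<And>i j. i < k \<Longrightarrow> j < k \<Longrightarrow> i \<noteq> j \<Longrightarrow> ((i, j) \<in> T \<longleftrightarrow> (j, i) \<notin> T)"
    using tour unfolding is_tournament_def by (meson atLeastLessThan_iff zero_le)
  have inT: "\<And>i j. (i,j) \<in> T \<Longrightarrow> i < k \<and> j < k" using T_sub by auto
  have U: "T \<union> T\<inverse> = ?O"
  proof (rule set_eqI)
    fix x show "x \<in> T \<union> T\<inverse> \<longleftrightarrow> x \<in> ?O"
    proof (cases x)
      case (Pair i j)
      have "(i,j) \<in> T \<union> T\<inverse> \<longleftrightarrow> i < k \<and> j < k \<and> i \<noteq> j"
      proof
        assume "(i,j) \<in> T \<union> T\<inverse>"
        hence "(i,j) \<in> T \<or> (j,i) \<in> T" by simp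
        thus "i < k \<and> j < k \<and> i \<noteq> j" using inT tr1 by blast
      next
        assume "i < k \<and> j < k \<and> i \<noteq> j"
        thus "(i,j) \<in> T \<union> T\<inverse>" using tr2[of i j] by blast
      qed
      thus ?thesis using Pair by simp
    qed
  qed
  have I: "T \<inter> T\<inverse> = {}"
  proof (rule equals0I)
    fix x assume "x \<in> T \<inter> T\<inverse>"
    then obtain i j where ij: "(i,j) \<in> T" "(j,i) \<in> T" by auto
    have "i < k" "j < k" using inT ij by auto
    thus False using tr1 tr2[of i j] ij by (cases "i = j") blast+
  qed
  have finT': "finite (T\<inverse>)" using finT by simp
  have "card (T \<union> T\<inverse>) = card T + card (T\<inverse>)"
    by (rule card_Un_disjoint[OF finT finT' I])
  moreover have "card (T\<inverse>) = card T" by (rule card_inverse)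
  ultimately have "2 * card T = k * k - k" using U card_offdiag by simp
  thus ?thesis by (simp add: diff_mult_distrib2)
qed

lemma Phi_empty: "Phi {} = real (card EE)"
proof -
  have "w {} f = 1" for f unfolding w_def alive_def mm_def by simp
  thus ?thesis unfolding Phi_def by simp
qed

lemma card_EE: "card EE \<le> n ^ k"
proof -
  have "card EE \<le> card ({0..<k} \<rightarrow>\<^sub>E {0..<n})"
    by (rule card_mono) (auto simp: EE_def intro: finite_PiE)
  also have "\<dots> = n ^ k" by (simp add: card_PiE)
  finally show ?thesis .
qed

lemma breaker_wins_if: "cc * real n ^ k < cc ^ card T \<Longrightarrow> breaker_wins n k T"
proof -
  assume H: "cc * real n ^ k < cc ^ card T"
  have as: "asym {}" unfolding asym_def by simp
  have b1: "Phi {} + (cc - 1) * AA {} e \<le> cc * real n ^ k" for e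
  proof -
    have "AA {} e \<le> Phi {}" by (rule AA_le_Phi)
    hence "(cc - 1) * AA {} e \<le> (cc - 1) * Phi {}" using cc_ge1 by (intro mult_left_mono) auto
    moreover have "Phi {} \<le> real n ^ k" using Phi_empty card_EE
      by (metis of_nat_le_iff of_nat_power)
    moreover have "cc * Phi {} \<le> cc * real n ^ k"
      using calculation(2) cc_ge1 by (intro mult_left_mono) auto
    moreover have "Phi {} + (cc - 1) * Phi {} = cc * Phi {}" by (simp add: algebra_simps)
    ultimately show ?thesis by linarith
  qed
  have "\<forall>e. legal_move n {} e \<longrightarrow> Phi {} + (cc - 1) * AA {} e < cc ^ card T"
    using b1 H le_less_trans by blast
  moreover have "Phi {} < cc ^ card T" using b1[of "(0,0)"] AA_nonneg[of "{}" "(0,0)"] cc_ge1 H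
    by (smt (verit) mult_nonneg_nonneg)
  ultimately show ?thesis unfolding breaker_wins_def using game[OF refl as] by blast
qed

end

lemma numeric:
  fixes n k C :: nat
  assumes n2: "n \<ge> 2" and kk: "real k \<ge> 4 * log 2 (real n) + 2" and C: "2 * C = k * (k - 1)"
  shows "sqrt 2 * real n ^ k < sqrt 2 ^ C"
proof -
  define L where "L = log 2 (real n)"
  have L1: "L \<ge> 1" unfolding L_def using n2 by simp
  have k6: "real k \<ge> 6" using kk L1 unfolding L_def by linarith
  have nL: "real n = 2 powr L" unfolding L_def using n2 by simp
  have RC: "real C = real k * (real k - 1) / 2"
  proof -
    have "real (2 * C) = real (k * (k - 1))" using C by metis
    thus ?thesis using k6 by (simp add: of_nat_diff)
  qed
  have "real k * (real k - 1) \<ge> real k * (4 * L + 1)"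
    using kk unfolding L_def by (intro mult_left_mono) auto
  hence lt: "1 + 2 * real k * L < real C" using RC k6 by (simp add: algebra_simps)
  have "2 * real n ^ (2 * k) = 2 powr (1 + 2 * real k * L)"
    by (simp add: nL powr_add powr_realpow[symmetric] powr_powr algebra_simps)
  also have "\<dots> < 2 powr real C" using lt by simp
  also have "\<dots> = 2 ^ C" by (simp add: powr_realpow)
  finally have *: "2 * real n ^ (2 * k) < 2 ^ C" .
  have "(sqrt 2 * real n ^ k) ^ 2 = 2 * real n ^ (2 * k)"
    by (simp add: power_mult_distrib power_mult[symmetric] mult.commute)
  moreover have "(sqrt 2 ^ C) ^ 2 = 2 ^ C"
    by (simp add: power_mult[symmetric] mult.commute[of C] power_mult)
  ultimately have "(sqrt 2 * real n ^ k) ^ 2 < (sqrt 2 ^ C) ^ 2" using * by simp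
  thus ?thesis by (rule power_less_imp_less_base) simp
qed

theorem theorem3:
  shows "\<exists>N::nat. \<forall>n\<ge>N. \<forall>(k::nat) T.
           real k \<ge> 4 * log 2 (real n) + 2 \<longrightarrow> is_tournament k T \<longrightarrow> breaker_wins n k T"
proof (intro exI[of _ 2] allI impI)
  fix n k T assume n: "2 \<le> n" and kk: "real k \<ge> 4 * log 2 (real n) + 2" and t: "is_tournament k T"
  interpret ctx n k T using t by unfold_locales
  show "breaker_wins n k T"
    using breaker_wins_if numeric[OF n kk card_T] by blast
qed

end
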